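(* Let $n\ge 4$, $d\ge 1$, $\tau>0$, $\sigma>0$. Let $\mu^\star_1,\mu^\star_2\stackrel{\mathrm{i.i.d.}}{\sim}\mathcal N(0,\tau^2 I_d)$ and $\xi_1,\dots,\xi_n\stackrel{\mathrm{i.i.d.}}{\sim}\mathcal N(0,\sigma^2 I_d)$, independent, let $z^\star_1,\dots,z^\star_n\in\{1,2\}$ be fixed labels with both classes $S^\star_\ell=\{i:z^\star_i=\ell\}$ nonempty, and $x_i=\mu^\star_{z^\star_i}+\xi_i$. Let $\mathcal P=\{C_1,C_2\}$ be a fixed partition of $[n]$ into two nonempty sets which is incorrect, i.e. $(C_1,C_2)\ne(S^\star_1,S^\star_2)$ and $(C_1,C_2)\neq(S^\star_2,S^\star_1)$. Then $$\mathbb P(\mathcal P\text{ is a fixed point of Hartigan's algorithm})\le\rho_h^{d/4},\qquad \rho_h=1-\left(\frac{4\tau^2(R^\star)^2n^{-1}}{3\tau^2+\sigma^2}\right)^2<1,$$ where $R^\star=\min(|S^\star_1|,|S^\star_2|)/n$.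
   Context: Centroids $\widehat\mu_k=|C_k|^{-1}\sum_{m\in C_k}x_m$. Hartigan weighted distance: $\Delta_H^2(x_i,C_k)=\frac{|C_k|}{|C_k|-1}\|x_i-\widehat\mu_k\|^2$ if $i\in C_k$, and $\frac{|C_k|}{|C_k|+1}\|x_i-\widehat\mu_k\|^2$ if $i\notin C_k$. A partition is a fixed point of Hartigan's algorithm if no single-sample move is strictly improving: for every $i$ in a cluster $C_k$ with $|C_k|>1$ and the other cluster $C_{k'}$, $\Delta_H^2(x_i,C_k)\le\Delta_H^2(x_i,C_{k'})$. Randomness is over the centers and noise. *)

theory Defs
  imports "HOL-Probability.Probability"
begin

text \<open>Points of R^d are represented as functions nat => real, only coordinates k < d matter.\<close>

definition sqdist :: "nat \<Rightarrow> (nat \<Rightarrow> real) \<Rightarrow> (nat \<Rightarrow> real) \<Rightarrow> real" where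
  "sqdist d u v = (\<Sum>k<d. (u k - v k)^2)"

definition centroid :: "(nat \<Rightarrow> nat \<Rightarrow> real) \<Rightarrow> nat set \<Rightarrow> nat \<Rightarrow> real" where
  "centroid X C = (\<lambda>k. (\<Sum>m\<in>C. X m k) / real (card C))"

definition hartigan_dist :: "nat \<Rightarrow> (nat \<Rightarrow> nat \<Rightarrow> real) \<Rightarrow> nat \<Rightarrow> nat set \<Rightarrow> real" where
  "hartigan_dist d X i C =
     (if i \<in> C then real (card C) / (real (card C) - 1) * sqdist d (X i) (centroid X C)
      else real (card C) / (real (card C) + 1) * sqdist d (X i) (centroid X C))"

definition hartigan_fixed_point :: "nat \<Rightarrow> (nat \<Rightarrow> nat \<Rightarrow> real) \<Rightarrow> nat set \<Rightarrow> nat set \<Rightarrow> bool" where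
  "hartigan_fixed_point d X C1 C2 \<longleftrightarrow>
     (\<forall>i\<in>C1. card C1 > 1 \<longrightarrow> hartigan_dist d X i C1 \<le> hartigan_dist d X i C2) \<and>
     (\<forall>i\<in>C2. card C2 > 1 \<longrightarrow> hartigan_dist d X i C2 \<le> hartigan_dist d X i C1)"

text \<open>Sample space: omega (l-1, k) is coordinate k of center mu*_l (l = 1,2),
  omega (i+1, k) is coordinate k of noise xi_i (i = 1..n).\<close>
definition gmm_measure :: "nat \<Rightarrow> nat \<Rightarrow> real \<Rightarrow> real \<Rightarrow> (nat \<times> nat \<Rightarrow> real) measure" where
  "gmm_measure n d \<tau> \<sigma> =
     (\<Pi>\<^sub>M jk\<in>{..<n+2} \<times> {..<d}.
        (if fst jk < 2 then density lborel (normal_density 0 \<tau>)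
         else density lborel (normal_density 0 \<sigma>)))"

text \<open>Observation x_i = mu*_{z i} + xi_i (samples indexed 1..n, labels z i in {1,2}).\<close>
definition obs :: "(nat \<Rightarrow> nat) \<Rightarrow> (nat \<times> nat \<Rightarrow> real) \<Rightarrow> nat \<Rightarrow> nat \<Rightarrow> real" where
  "obs z \<omega> i k = \<omega> (z i - 1, k) + \<omega> (i + 1, k)"

end

theory Submission
  imports Defs
begin


lemma normal_exp_sq_identity:
  fixes s r y :: real
  assumes s: "s > 0" and r: "2 * r * s\<^sup>2 < 1"
  shows "normal_density 0 s y * exp (r * y\<^sup>2) =
         (1 / sqrt (1 - 2 * r * s\<^sup>2)) * normal_density 0 (s / sqrt (1 - 2 * r * s\<^sup>2)) y"
proof -
  define q where "q = 1 - 2 * r * s\<^sup>2"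
  have q: "q > 0" using r by (simp add: q_def)
  have sq: "sqrt (2 * pi * (s / sqrt q)\<^sup>2) = sqrt (2 * pi * s\<^sup>2) / sqrt q"
    using q s by (simp add: power_divide real_sqrt_divide)
  have e: "- (0 - y)\<^sup>2 / (2 * (s / sqrt q)\<^sup>2) = - (y - 0)\<^sup>2 / (2 * s\<^sup>2) + r * y\<^sup>2"
    using q s by (simp add: power_divide q_def field_simps)
  have "(1 / sqrt q) * normal_density 0 (s / sqrt q) y
      = (1 / sqrt q) * (1 / (sqrt (2 * pi * s\<^sup>2) / sqrt q)) * exp (- (y - 0)\<^sup>2 / (2 * s\<^sup>2) + r * y\<^sup>2)"
    unfolding normal_density_def sq e[symmetric] by simp
  also have "\<dots> = (1 / sqrt (2 * pi * s\<^sup>2)) * exp (- (y - 0)\<^sup>2 / (2 * s\<^sup>2)) * exp (r * y\<^sup>2)"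
    using q by (simp add: exp_add[symmetric])
  finally show ?thesis unfolding q_def[symmetric] normal_density_def by simp
qed

lemma nn_integral_normal_exp_sq:
  fixes s r :: real
  assumes s: "s > 0" and r: "2 * r * s\<^sup>2 < 1"
  shows "(\<integral>\<^sup>+y. ennreal (normal_density 0 s y) * ennreal (exp (r * y\<^sup>2)) \<partial>lborel)
         = ennreal (1 / sqrt (1 - 2 * r * s\<^sup>2))"
proof -
  have pos: "s / sqrt (1 - 2 * r * s\<^sup>2) > 0" using s r by simp
  have "(\<integral>\<^sup>+y. ennreal (normal_density 0 s y) * ennreal (exp (r * y\<^sup>2)) \<partial>lborel)
     = (\<integral>\<^sup>+y. ennreal (1 / sqrt (1 - 2 * r * s\<^sup>2)) * ennreal (normal_density 0 (s / sqrt (1 - 2 * r * s\<^sup>2)) y) \<partial>lborel)"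
    apply (intro nn_integral_cong)
    apply (subst ennreal_mult'[symmetric], simp)
    apply (subst ennreal_mult'[symmetric], use r in simp)
    apply (simp add: normal_exp_sq_identity[OF s r])
    done
  also have "\<dots> = ennreal (1 / sqrt (1 - 2 * r * s\<^sup>2)) * (\<integral>\<^sup>+y. ennreal (normal_density 0 (s / sqrt (1 - 2 * r * s\<^sup>2)) y) \<partial>lborel)"
    by (rule nn_integral_cmult) simp
  also have "(\<integral>\<^sup>+y. ennreal (normal_density 0 (s / sqrt (1 - 2 * r * s\<^sup>2)) y) \<partial>lborel) = 1"
    by (subst nn_integral_eq_integral) (use pos in \<open>auto simp: integrable_normal_density integral_normal_density\<close>)
  finally show ?thesis by simp
qed


locale gprod =
  fixes I :: "'i set" and sd :: "'i \<Rightarrow> real"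
  assumes finI: "finite I" and neI: "I \<noteq> {}" and sdpos: "\<And>i. sd i > 0"
begin

definition "MM = (\<Pi>\<^sub>M i\<in>I. density lborel (normal_density 0 (sd i)))"

lemma comp_prob: "prob_space (density lborel (normal_density 0 (sd i)))"
  using prob_space_normal_density sdpos by blast

lemma prob_MM: "prob_space MM"
  unfolding MM_def by (intro prob_space_PiM comp_prob)

lemma space_MM: "space MM = (\<Pi>\<^sub>E i\<in>I. UNIV)"
  unfolding MM_def by (simp add: space_PiM)

lemma sets_MM: "sets MM = sets (\<Pi>\<^sub>M i\<in>I. (borel :: real measure))"
  unfolding MM_def by (intro sets_PiM_cong) auto

lemma comp_distributed:
  assumes "i \<in> I"
  shows "distributed MM lborel (\<lambda>\<omega>. \<omega> i) (\<lambda>x. ennreal (normal_density 0 (sd i) x))"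
proof -
  have m: "(\<lambda>\<omega>. \<omega> i) \<in> measurable MM lborel"
    unfolding MM_def using assms by (simp add: measurable_cong_sets[OF refl sets_lborel])
  have "distr MM lborel (\<lambda>\<omega>. \<omega> i) = distr MM (density lborel (normal_density 0 (sd i))) (\<lambda>\<omega>. \<omega> i)"
    by (rule distr_cong) auto
  also have "\<dots> = density lborel (normal_density 0 (sd i))"
    unfolding MM_def by (rule distr_PiM_component[OF comp_prob assms])
  finally show ?thesis unfolding distributed_def using m by auto
qed

lemma comp_indep: "prob_space.indep_vars MM (\<lambda>_. borel) (\<lambda>i \<omega>. \<omega> i) I"
proof -
  interpret prob_space MM by (rule prob_MM)
  have rv: "\<And>i. i \<in> I \<Longrightarrow> random_variable borel (\<lambda>\<omega>. \<omega> i)"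
    unfolding MM_def by (simp add: measurable_cong_sets[OF refl sets_lborel])
  have eq: "distr MM (\<Pi>\<^sub>M i\<in>I. borel) (\<lambda>x. \<lambda>i\<in>I. x i) = (\<Pi>\<^sub>M i\<in>I. distr MM borel (\<lambda>\<omega>. \<omega> i))"
  proof -
    have "distr MM (\<Pi>\<^sub>M i\<in>I. borel) (\<lambda>x. \<lambda>i\<in>I. x i) = distr MM (\<Pi>\<^sub>M i\<in>I. borel) (\<lambda>x. x)"
      by (rule distr_cong) (auto simp: space_MM)
    also have "\<dots> = MM" by (rule distr_id2) (simp add: sets_MM)
    also have "MM = (\<Pi>\<^sub>M i\<in>I. distr MM borel (\<lambda>\<omega>. \<omega> i))"
    proof -
      have "\<And>i. i \<in> I \<Longrightarrow> distr MM borel (\<lambda>\<omega>. \<omega> i) = density lborel (normal_density 0 (sd i))"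
      proof -
        fix i assume i: "i \<in> I"
        have "distr MM borel (\<lambda>\<omega>. \<omega> i) = distr MM (density lborel (normal_density 0 (sd i))) (\<lambda>\<omega>. \<omega> i)"
          by (rule distr_cong) auto
        also have "\<dots> = density lborel (normal_density 0 (sd i))"
          unfolding MM_def by (rule distr_PiM_component[OF comp_prob i])
        finally show "distr MM borel (\<lambda>\<omega>. \<omega> i) = density lborel (normal_density 0 (sd i))" .
      qed
      then show ?thesis unfolding MM_def by (intro PiM_cong) auto
    qed
    finally show ?thesis .
  qed
  show ?thesis using indep_vars_iff_distr_eq_PiM'[OF neI rv] eq by simp
qed

end

locale gprod2 =
  fixes A :: "'a set" and K :: "'b set" and s :: "'a \<Rightarrow> real"
  assumes finA: "finite A" and neA: "A \<noteq> {}" and finK: "finite K" and neK: "K \<noteq> {}"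
    and spos: "\<And>j. s j > 0"
begin

sublocale G: gprod "A \<times> K" "\<lambda>p. s (fst p)"
  by unfold_locales (auto simp: finA neA finK neK spos)

abbreviation "M \<equiv> G.MM"

lemma Pspace: "prob_space M" by (rule G.prob_MM)

lemma lin_normal:
  assumes k: "k \<in> K" and nz: "\<exists>j\<in>A. w j \<noteq> 0"
  shows "distributed M lborel (\<lambda>\<omega>. \<Sum>j\<in>A. w j * \<omega> (j,k))
           (\<lambda>x. ennreal (normal_density 0 (sqrt (\<Sum>j\<in>A. (w j * s j)\<^sup>2)) x))"
proof -
  interpret prob_space M by (rule Pspace)
  define J where "J = {j\<in>A. w j \<noteq> 0}"
  have J: "finite J" "J \<noteq> {}" "J \<subseteq> A" using nz finA by (auto simp: J_def)
  have ind0: "indep_vars (\<lambda>j. PiM {(j,k)} (\<lambda>_. borel)) (\<lambda>j \<omega>. restrict (\<lambda>i. \<omega> i) {(j,k)}) J"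
    by (rule indep_vars_restrict[OF G.comp_indep]) (use J k in \<open>auto simp: disjoint_family_on_def\<close>)
  have ind1: "indep_vars (\<lambda>_. borel) (\<lambda>j \<omega>. (\<lambda>f. w j * f (j,k)) (restrict (\<lambda>i. \<omega> i) {(j,k)})) J"
    by (rule indep_vars_compose2[OF ind0]) simp
  have ind: "indep_vars (\<lambda>_. borel) (\<lambda>j \<omega>. w j * \<omega> (j,k)) J"
    using ind1 by simp
  have dist: "distributed M lborel (\<lambda>\<omega>. w j * \<omega> (j,k)) (\<lambda>x. ennreal (normal_density 0 (\<bar>w j\<bar> * s j) x))"
    if j: "j \<in> J" for j
  proof -
    have "distributed M lborel (\<lambda>\<omega>. 0 + w j * \<omega> (j,k)) (\<lambda>x. ennreal (normal_density (0 + w j * 0) (\<bar>w j\<bar> * s j) x))"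
        using normal_density_affine[OF G.comp_distributed[of "(j,k)"], where \<alpha>="w j" and \<beta>=0] j J k spos
      by (auto simp: J_def)
    then show ?thesis by simp
  qed
  have "distributed M lborel (\<lambda>\<omega>. \<Sum>j\<in>J. w j * \<omega> (j,k))
          (\<lambda>x. ennreal (normal_density (\<Sum>j\<in>J. 0) (sqrt (\<Sum>j\<in>J. (\<bar>w j\<bar> * s j)\<^sup>2)) x))"
    by (rule sum_indep_normal[OF J(1) J(2) ind _ dist]) (use spos in \<open>auto simp: J_def\<close>)
  moreover have "\<And>\<omega>. (\<Sum>j\<in>J. w j * \<omega> (j,k)) = (\<Sum>j\<in>A. w j * \<omega> (j,k))"
    by (rule sum.mono_neutral_left) (use finA in \<open>auto simp: J_def\<close>)
  moreover have "(\<Sum>j\<in>J. (\<bar>w j\<bar> * s j)\<^sup>2) = (\<Sum>j\<in>J. (w j * s j)\<^sup>2)"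
    by (simp add: power_mult_distrib)
  moreover have "(\<Sum>j\<in>J. (w j * s j)\<^sup>2) = (\<Sum>j\<in>A. (w j * s j)\<^sup>2)"
    by (rule sum.mono_neutral_left) (use finA in \<open>auto simp: J_def\<close>)
  ultimately show ?thesis by simp
qed

lemma mgf_one:
  assumes k: "k \<in> K" and nz: "\<exists>j\<in>A. w j \<noteq> 0"
    and r: "2 * r * (\<Sum>j\<in>A. (w j * s j)\<^sup>2) < 1"
  shows "(\<integral>\<^sup>+\<omega>. ennreal (exp (r * (\<Sum>j\<in>A. w j * \<omega> (j,k))\<^sup>2)) \<partial>M)
       = ennreal (1 / sqrt (1 - 2 * r * (\<Sum>j\<in>A. (w j * s j)\<^sup>2)))"
proof -
  define V where "V = (\<Sum>j\<in>A. (w j * s j)\<^sup>2)"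
  obtain j0 where j0: "j0 \<in> A" "w j0 \<noteq> 0" using nz by blast
  have Vpos: "V > 0" unfolding V_def
    by (rule sum_pos2[OF finA j0(1)]) (use j0 spos[of j0] in simp_all)
  have sq: "(sqrt V)\<^sup>2 = V" using Vpos by simp
  have "(\<integral>\<^sup>+\<omega>. ennreal (exp (r * (\<Sum>j\<in>A. w j * \<omega> (j,k))\<^sup>2)) \<partial>M)
     = (\<integral>\<^sup>+x. ennreal (normal_density 0 (sqrt V) x) * ennreal (exp (r * x\<^sup>2)) \<partial>lborel)"
    unfolding V_def
    by (rule distributed_nn_integral[OF lin_normal[OF k nz], symmetric]) simp
  also have "\<dots> = ennreal (1 / sqrt (1 - 2 * r * (sqrt V)\<^sup>2))"
    by (rule nn_integral_normal_exp_sq) (use Vpos r in \<open>auto simp: sq V_def\<close>)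
  finally show ?thesis using sq by (simp add: V_def)
qed

lemma mgf_all:
  assumes nz: "\<exists>j\<in>A. w j \<noteq> 0"
    and r: "2 * r * (\<Sum>j\<in>A. (w j * s j)\<^sup>2) < 1"
  shows "(\<integral>\<^sup>+\<omega>. ennreal (exp (r * (\<Sum>k\<in>K. (\<Sum>j\<in>A. w j * \<omega> (j,k))\<^sup>2))) \<partial>M)
       = ennreal (1 / sqrt (1 - 2 * r * (\<Sum>j\<in>A. (w j * s j)\<^sup>2))) ^ card K"
proof -
  interpret prob_space M by (rule Pspace)
  have ind0: "indep_vars (\<lambda>k. PiM (A \<times> {k}) (\<lambda>_. borel)) (\<lambda>k \<omega>. restrict (\<lambda>i. \<omega> i) (A \<times> {k})) K"
    by (rule indep_vars_restrict[OF G.comp_indep]) (auto simp: disjoint_family_on_def)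
  have ind1: "indep_vars (\<lambda>_. borel) (\<lambda>k \<omega>. (\<lambda>f. exp (r * (\<Sum>j\<in>A. w j * f (j,k))\<^sup>2)) (restrict (\<lambda>i. \<omega> i) (A \<times> {k}))) K"
    by (rule indep_vars_compose2[OF ind0]) measurable
  have ind: "indep_vars (\<lambda>_. borel) (\<lambda>k \<omega>. exp (r * (\<Sum>j\<in>A. w j * \<omega> (j,k))\<^sup>2)) K"
    using ind1 by (rule indep_vars_cong[THEN iffD1, rotated 3]) (auto intro!: sum.cong)
  have "(\<integral>\<^sup>+\<omega>. ennreal (exp (r * (\<Sum>k\<in>K. (\<Sum>j\<in>A. w j * \<omega> (j,k))\<^sup>2))) \<partial>M)
      = (\<integral>\<^sup>+\<omega>. ennreal (\<Prod>k\<in>K. exp (r * (\<Sum>j\<in>A. w j * \<omega> (j,k))\<^sup>2)) \<partial>M)"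
    by (simp add: sum_distrib_left exp_sum finK)
  also have "\<dots> = (\<Prod>k\<in>K. \<integral>\<^sup>+\<omega>. ennreal (exp (r * (\<Sum>j\<in>A. w j * \<omega> (j,k))\<^sup>2)) \<partial>M)"
  proof -
    have indE: "indep_vars (\<lambda>_. borel) (\<lambda>k \<omega>. ennreal (exp (r * (\<Sum>j\<in>A. w j * \<omega> (j,k))\<^sup>2))) K"
      by (rule indep_vars_compose2[OF ind, where Y="\<lambda>k x. ennreal x"]) simp
    have "(\<integral>\<^sup>+\<omega>. (\<Prod>k\<in>K. ennreal (exp (r * (\<Sum>j\<in>A. w j * \<omega> (j,k))\<^sup>2))) \<partial>M)
        = (\<Prod>k\<in>K. \<integral>\<^sup>+\<omega>. ennreal (exp (r * (\<Sum>j\<in>A. w j * \<omega> (j,k))\<^sup>2)) \<partial>M)"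
      by (rule indep_vars_nn_integral[OF finK indE]) simp
    then show ?thesis by (simp add: prod_ennreal)
  qed
  also have "\<dots> = (\<Prod>k\<in>K. ennreal (1 / sqrt (1 - 2 * r * (\<Sum>j\<in>A. (w j * s j)\<^sup>2))))"
    by (rule prod.cong) (auto intro: mgf_one[OF _ nz r])
  finally show ?thesis by simp
qed

lemma comp_meas: "(\<lambda>\<omega>. \<omega> p) \<in> borel_measurable M" if "p \<in> A \<times> K" for p
  using that by (simp add: measurable_cong_sets[OF G.sets_MM refl])

lemma quad_meas: "(\<lambda>\<omega>. \<Sum>k\<in>K. (\<Sum>j\<in>A. w j * \<omega> (j,k))\<^sup>2) \<in> borel_measurable M"
  by (intro borel_measurable_sum borel_measurable_power borel_measurable_times borel_measurable_const comp_meas) auto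

end


context gprod2
begin

lemma chernoff_two:
  fixes a b :: "'a \<Rightarrow> real" and \<alpha> \<beta> Aa Bb :: real
  assumes nza: "\<exists>j\<in>A. a j \<noteq> 0" and nzb: "\<exists>j\<in>A. b j \<noteq> 0"
    and \<alpha>: "\<alpha> > 0" and \<beta>: "\<beta> > 0"
    and Aa: "Aa = \<alpha> * (\<Sum>j\<in>A. (a j * s j)\<^sup>2)" and Bb: "Bb = \<beta> * (\<Sum>j\<in>A. (b j * s j)\<^sup>2)"
    and AB: "Bb < Aa"
  shows "emeasure M {\<omega>\<in>space M. \<alpha> * (\<Sum>k\<in>K. (\<Sum>j\<in>A. a j * \<omega> (j,k))\<^sup>2)
                                   \<le> \<beta> * (\<Sum>k\<in>K. (\<Sum>j\<in>A. b j * \<omega> (j,k))\<^sup>2)}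
         \<le> ennreal ((1 / (1 + (Aa - Bb)\<^sup>2 / (4 * Aa * Bb))) powr (real (card K) / 4))"
proof -
  define Va where "Va = (\<Sum>j\<in>A. (a j * s j)\<^sup>2)"
  define Vb where "Vb = (\<Sum>j\<in>A. (b j * s j)\<^sup>2)"
  obtain ja where ja: "ja \<in> A" "a ja \<noteq> 0" using nza by blast
  obtain jb where jb: "jb \<in> A" "b jb \<noteq> 0" using nzb by blast
  have Va: "Va > 0" unfolding Va_def
    by (rule sum_pos2[OF finA ja(1)]) (use ja spos[of ja] in simp_all)
  have Vb: "Vb > 0" unfolding Vb_def
    by (rule sum_pos2[OF finA jb(1)]) (use jb spos[of jb] in simp_all)
  have Bpos: "Bb > 0" using Bb \<beta> Vb by (simp add: Vb_def)
  have Apos: "Aa > 0" using AB Bpos by simp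
  define c where "c = (Aa - Bb) / (2 * Aa * Bb)"
  have cpos: "c > 0" using AB Apos Bpos by (simp add: c_def)
  have cB': "c * Bb = (Aa - Bb) / (2 * Aa)" using Apos Bpos by (simp add: c_def field_simps)
  have cB: "c * Bb < 1" unfolding cB' using AB Apos Bpos by (simp add: field_simps)
  define t where "t = c / 4"
  have tpos: "t > 0" using cpos by (simp add: t_def)
  define d where "d = card K"
  define U where "U = (\<lambda>\<omega>. \<Sum>k\<in>K. (\<Sum>j\<in>A. a j * \<omega> (j,k))\<^sup>2)"
  define W where "W = (\<lambda>\<omega>. \<Sum>k\<in>K. (\<Sum>j\<in>A. b j * \<omega> (j,k))\<^sup>2)"
  define X1 where "X1 = 1 + c * Aa"
  define X2 where "X2 = 1 - c * Bb"
  have X1: "X1 > 0" using mult_pos_pos[OF cpos Apos] by (simp add: X1_def)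
  have X2: "X2 > 0" using cB by (simp add: X2_def)
  define Pa where "Pa = (1 / sqrt X1) ^ d"
  define Pb where "Pb = (1 / sqrt X2) ^ d"
  have Pa: "Pa > 0" using X1 by (simp add: Pa_def)
  have Pb: "Pb > 0" using X2 by (simp add: Pb_def)
  have intA: "(\<integral>\<^sup>+\<omega>. ennreal (exp ((- 2 * t * \<alpha>) * U \<omega>)) \<partial>M) = ennreal Pa"
  proof -
    have "2 * (- 2 * t * \<alpha>) * Va < 1" using mult_pos_pos[OF mult_pos_pos[OF tpos \<alpha>] Va] by (simp add: algebra_simps)
    from mgf_all[OF nza this[unfolded Va_def]]
    have "(\<integral>\<^sup>+\<omega>. ennreal (exp ((- 2 * t * \<alpha>) * U \<omega>)) \<partial>M) = ennreal (1 / sqrt (1 - 2 * (- 2 * t * \<alpha>) * Va)) ^ d"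
      by (simp add: U_def d_def Va_def)
    also have "1 - 2 * (- 2 * t * \<alpha>) * Va = X1"
      by (simp add: X1_def t_def Aa Va_def)
    finally show ?thesis using X1 by (simp add: Pa_def ennreal_power)
  qed
  have intB: "(\<integral>\<^sup>+\<omega>. ennreal (exp ((2 * t * \<beta>) * W \<omega>)) \<partial>M) = ennreal Pb"
  proof -
    have eq: "1 - 2 * (2 * t * \<beta>) * Vb = X2"
      by (simp add: X2_def t_def Bb Vb_def)
    have "2 * (2 * t * \<beta>) * Vb < 1" using eq X2 by simp
    from mgf_all[OF nzb this[unfolded Vb_def]]
    have "(\<integral>\<^sup>+\<omega>. ennreal (exp ((2 * t * \<beta>) * W \<omega>)) \<partial>M) = ennreal (1 / sqrt (1 - 2 * (2 * t * \<beta>) * Vb)) ^ d"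
      by (simp add: W_def d_def Vb_def)
    also note eq
    finally show ?thesis using X2 by (simp add: Pb_def ennreal_power)
  qed
  define lam where "lam = sqrt (Pb / Pa)"
  have lam: "lam > 0" using Pa Pb by (simp add: lam_def)
  define E where "E = {\<omega>\<in>space M. \<alpha> * U \<omega> \<le> \<beta> * W \<omega>}"
  have Emeas: "E \<in> sets M" unfolding E_def U_def W_def
    using quad_meas[of a] quad_meas[of b] by measurable
  have pw: "indicator E \<omega> \<le> ennreal (lam / 2 * exp ((- 2 * t * \<alpha>) * U \<omega>) + 1 / (2 * lam) * exp ((2 * t * \<beta>) * W \<omega>))"
    if "\<omega> \<in> space M" for \<omega>
  proof (cases "\<omega> \<in> E")
    case True
    define p where "p = exp (- t * \<alpha> * U \<omega>)"
    define q where "q = exp (t * \<beta> * W \<omega>)"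
    have "1 \<le> p * q"
    proof -
      have "0 \<le> t * (\<beta> * W \<omega> - \<alpha> * U \<omega>)" using True tpos by (simp add: E_def)
      then have "1 \<le> exp (t * (\<beta> * W \<omega> - \<alpha> * U \<omega>))" by simp
      also have "\<dots> = p * q" by (simp add: p_def q_def exp_add[symmetric] algebra_simps)
      finally show ?thesis .
    qed
    also have "p * q \<le> lam / 2 * p\<^sup>2 + 1 / (2 * lam) * q\<^sup>2"
    proof -
      have "0 \<le> (lam * p - q)\<^sup>2" by simp
      then have "2 * lam * (p * q) \<le> lam\<^sup>2 * p\<^sup>2 + q\<^sup>2" by (simp add: power2_eq_square algebra_simps)
      then show ?thesis using lam by (simp add: field_simps power2_eq_square)
    qed
    also have "p\<^sup>2 = exp ((- 2 * t * \<alpha>) * U \<omega>)"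
      by (simp add: p_def power2_eq_square exp_add[symmetric])
    also have "q\<^sup>2 = exp ((2 * t * \<beta>) * W \<omega>)"
      by (simp add: q_def power2_eq_square exp_add[symmetric])
    finally show ?thesis using True by simp
  next
    case False
    then show ?thesis by simp
  qed
  have "emeasure M E = (\<integral>\<^sup>+\<omega>. indicator E \<omega> \<partial>M)"
    using Emeas by simp
  also have "\<dots> \<le> (\<integral>\<^sup>+\<omega>. ennreal (lam / 2 * exp ((- 2 * t * \<alpha>) * U \<omega>) + 1 / (2 * lam) * exp ((2 * t * \<beta>) * W \<omega>)) \<partial>M)"
    by (rule nn_integral_mono) (rule pw)
  also have "\<dots> = (\<integral>\<^sup>+\<omega>. ennreal (lam / 2) * ennreal (exp ((- 2 * t * \<alpha>) * U \<omega>)) + ennreal (1 / (2 * lam)) * ennreal (exp ((2 * t * \<beta>) * W \<omega>)) \<partial>M)"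
  proof (rule nn_integral_cong)
    fix \<omega>
    have l1: "0 \<le> lam / 2 * exp ((- 2 * t * \<alpha>) * U \<omega>)" using lam by simp
    have l2: "0 \<le> 1 / (2 * lam) * exp ((2 * t * \<beta>) * W \<omega>)" using lam by simp
    show "ennreal (lam / 2 * exp ((- 2 * t * \<alpha>) * U \<omega>) + 1 / (2 * lam) * exp ((2 * t * \<beta>) * W \<omega>))
       = ennreal (lam / 2) * ennreal (exp ((- 2 * t * \<alpha>) * U \<omega>)) + ennreal (1 / (2 * lam)) * ennreal (exp ((2 * t * \<beta>) * W \<omega>))"
    proof -
      have a: "ennreal (lam / 2 * exp ((- 2 * t * \<alpha>) * U \<omega>)) = ennreal (lam / 2) * ennreal (exp ((- 2 * t * \<alpha>) * U \<omega>))"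
        by (rule ennreal_mult) (use lam in auto)
      have b: "ennreal (1 / (2 * lam) * exp ((2 * t * \<beta>) * W \<omega>)) = ennreal (1 / (2 * lam)) * ennreal (exp ((2 * t * \<beta>) * W \<omega>))"
        by (rule ennreal_mult) (use lam in auto)
      show ?thesis unfolding ennreal_plus[OF l1 l2] a b ..
    qed
  qed
  also have "\<dots> = ennreal (lam / 2) * (\<integral>\<^sup>+\<omega>. ennreal (exp ((- 2 * t * \<alpha>) * U \<omega>)) \<partial>M) + ennreal (1 / (2 * lam)) * (\<integral>\<^sup>+\<omega>. ennreal (exp ((2 * t * \<beta>) * W \<omega>)) \<partial>M)"
  proof -
    have mU: "U \<in> borel_measurable M" unfolding U_def by (rule quad_meas)
    have mW: "W \<in> borel_measurable M" unfolding W_def by (rule quad_meas)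
    have m1: "(\<lambda>\<omega>. ennreal (exp ((- 2 * t * \<alpha>) * U \<omega>))) \<in> borel_measurable M"
      using mU by measurable
    have m2: "(\<lambda>\<omega>. ennreal (exp ((2 * t * \<beta>) * W \<omega>))) \<in> borel_measurable M"
      using mW by measurable
    show ?thesis
      apply (subst nn_integral_add)
      apply (use mU mW in measurable)
      apply (use mU mW in measurable)
      apply (simp only: nn_integral_cmult[OF m1] nn_integral_cmult[OF m2])
      done
  qed
  also have "\<dots> = ennreal (lam / 2 * Pa + 1 / (2 * lam) * Pb)"
  proof -
    have a: "ennreal (lam / 2) * ennreal Pa = ennreal (lam / 2 * Pa)"
      by (rule ennreal_mult[symmetric]) (use lam Pa in auto)
    have b: "ennreal (1 / (2 * lam)) * ennreal Pb = ennreal (1 / (2 * lam) * Pb)"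
      by (rule ennreal_mult[symmetric]) (use lam Pb in auto)
    have c: "ennreal (lam / 2 * Pa) + ennreal (1 / (2 * lam) * Pb) = ennreal (lam / 2 * Pa + 1 / (2 * lam) * Pb)"
      by (rule ennreal_plus[symmetric]) (use lam Pa Pb in auto)
    show ?thesis unfolding intA intB a b c ..
  qed
  also have "lam / 2 * Pa + 1 / (2 * lam) * Pb = sqrt (Pa * Pb)"
  proof -
    have "lam * Pa = sqrt (Pb / Pa) * sqrt (Pa * Pa)" using Pa by (simp add: lam_def)
    also have "\<dots> = sqrt (Pa * Pb)" unfolding real_sqrt_mult[symmetric] using Pa by simp
    finally have 1: "lam * Pa = sqrt (Pa * Pb)" .
    have "Pb / lam = sqrt (Pb * Pb) / sqrt (Pb / Pa)" using Pb by (simp add: lam_def)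
    also have "\<dots> = sqrt (Pa * Pb)" unfolding real_sqrt_divide[symmetric] using Pa Pb by simp
    finally have 2: "Pb / lam = sqrt (Pa * Pb)" .
    have "lam / 2 * Pa + 1 / (2 * lam) * Pb = (lam * Pa) / 2 + (Pb / lam) / 2" by simp
    then show ?thesis unfolding 1 2 by simp
  qed
  also have "sqrt (Pa * Pb) = (1 / (X1 * X2)) powr (real d / 4)"
  proof -
    define Y where "Y = X1 * X2"
    have Y: "Y > 0" using X1 X2 by (simp add: Y_def)
    have "Pa * Pb = (1 / sqrt Y) ^ d" by (simp add: Pa_def Pb_def Y_def power_mult_distrib[symmetric] real_sqrt_mult)
    also have "1 / sqrt Y = (1 / Y) powr (1/2)" using Y by (simp add: powr_half_sqrt real_sqrt_divide)
    also have "((1 / Y) powr (1/2)) ^ d = (1 / Y) powr (real d / 2)"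
      using Y by (simp add: powr_realpow[symmetric] powr_powr)
    finally have "sqrt (Pa * Pb) = sqrt ((1 / Y) powr (real d / 2))" by simp
    also have "\<dots> = ((1 / Y) powr (real d / 2)) powr (1/2)" by (simp add: powr_half_sqrt)
    also have "\<dots> = (1 / Y) powr (real d / 4)" by (simp add: powr_powr)
    finally show ?thesis by (simp add: Y_def)
  qed
  finally have fin: "emeasure M E \<le> ennreal ((1 / (X1 * X2)) powr (real d / 4))" .
  have XX: "X1 * X2 = 1 + (Aa - Bb)\<^sup>2 / (4 * Aa * Bb)"
  proof -
    have e1: "c * (Aa - Bb) = (Aa - Bb)\<^sup>2 / (2 * Aa * Bb)" by (simp add: c_def power2_eq_square)
    have e2: "c * c * Aa * Bb = (Aa - Bb)\<^sup>2 / (4 * Aa * Bb)"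
      using Apos Bpos by (simp add: c_def power2_eq_square field_simps)
    have "X1 * X2 = 1 + c * (Aa - Bb) - c * c * Aa * Bb" by (simp add: X1_def X2_def algebra_simps)
    also have "\<dots> = 1 + (Aa - Bb)\<^sup>2 / (2 * Aa * Bb) - (Aa - Bb)\<^sup>2 / (4 * Aa * Bb)" unfolding e1 e2 ..
    also have "\<dots> = 1 + (Aa - Bb)\<^sup>2 / (4 * Aa * Bb)" using Apos Bpos by (simp add: field_simps)
    finally show ?thesis .
  qed
  have EE: "E = {\<omega>\<in>space M. \<alpha> * (\<Sum>k\<in>K. (\<Sum>j\<in>A. a j * \<omega> (j,k))\<^sup>2)
                                   \<le> \<beta> * (\<Sum>k\<in>K. (\<Sum>j\<in>A. b j * \<omega> (j,k))\<^sup>2)}"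
    by (simp add: E_def U_def W_def)
  show ?thesis using fin unfolding XX EE d_def .
qed

end


lemma comb_pure:
  fixes b c N m :: real
  assumes "c \<ge> 2" "N \<ge> 4" "c \<le> N" "0 \<le> m" "m \<le> b"
  shows "4 * m\<^sup>2 / N ^ 3 \<le> b\<^sup>2 / (c * (c - 1))"
proof -
  have cc: "0 < c * (c - 1)" using assms by simp
  have cN: "c * (c - 1) \<le> N\<^sup>2" using assms by (simp add: power2_eq_square mult_mono)
  have mb: "m\<^sup>2 \<le> b\<^sup>2" using assms by (simp add: power_mono)
  have "4 * m\<^sup>2 / N ^ 3 \<le> 4 * b\<^sup>2 / N ^ 3" using mb assms by (simp add: divide_right_mono)
  also have "\<dots> = (4 / N) * (b\<^sup>2 / N\<^sup>2)" using assms by (simp add: power2_eq_square power3_eq_cube)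
  also have "\<dots> \<le> 1 * (b\<^sup>2 / N\<^sup>2)" using assms by (intro mult_right_mono) simp_all
  also have "\<dots> \<le> b\<^sup>2 / (c * (c - 1))" using cc cN by (simp add: frac_le)
  finally show ?thesis .
qed

lemma comb_mixed:
  fixes a1 b1 a2 b2 :: real
  assumes "a1 \<ge> 0" "b1 \<ge> 0" "a2 \<ge> 0" "b2 \<ge> 0" "a1 + b1 \<ge> 2" "a2 + b2 \<ge> 2"
  defines "c \<equiv> a1 + b1" and "c' \<equiv> a2 + b2"
  shows "(b1\<^sup>2/(c*(c-1)) - b2\<^sup>2/(c'*(c'+1))) + (a1\<^sup>2/(c*(c-1)) - a2\<^sup>2/(c'*(c'+1)))
       + (b2\<^sup>2/(c'*(c'-1)) - b1\<^sup>2/(c*(c+1))) + (a2\<^sup>2/(c'*(c'-1)) - a1\<^sup>2/(c*(c+1))) \<ge> 4 / (c + c')"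
proof -
  have c: "c \<ge> 2" "c' \<ge> 2" using assms by (simp_all add: c_def c'_def)
  have id: "\<And>x y :: real. y \<ge> 2 \<Longrightarrow> x/(y*(y-1)) - x/(y*(y+1)) = 2 * x / (y * (y - 1) * (y + 1))"
  proof -
    fix x y :: real assume y: "y \<ge> 2"
    then have nz: "y \<noteq> 0" "y - 1 \<noteq> 0" "y + 1 \<noteq> 0" "y * (y - 1) \<noteq> 0" "y * (y + 1) \<noteq> 0" "y * (y - 1) * (y + 1) \<noteq> 0" by auto
    show "x/(y*(y-1)) - x/(y*(y+1)) = 2 * x / (y * (y - 1) * (y + 1))"
      using nz by (simp add: field_simps)
  qed
  have sq1: "a1\<^sup>2 + b1\<^sup>2 \<ge> c\<^sup>2 / 2" unfolding c_def
    using sum_squares_ge_zero[of "a1 - b1" 0] by (simp add: power2_eq_square algebra_simps)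
  have sq2: "a2\<^sup>2 + b2\<^sup>2 \<ge> c'\<^sup>2 / 2" unfolding c'_def
    using sum_squares_ge_zero[of "a2 - b2" 0] by (simp add: power2_eq_square algebra_simps)
  have g: "\<And>x y :: real. y \<ge> 2 \<Longrightarrow> x \<ge> y\<^sup>2 / 2 \<Longrightarrow> 2 * x / (y * (y - 1) * (y + 1)) \<ge> 1 / y"
  proof -
    fix x y :: real assume y: "y \<ge> 2" and x: "x \<ge> y\<^sup>2 / 2"
    have p: "y * (y - 1) * (y + 1) > 0" using y by simp
    have "1 / y = y\<^sup>2 / (y * y * y)" using y by (simp add: power2_eq_square)
    also have "\<dots> \<le> y\<^sup>2 / (y * (y - 1) * (y + 1))"
      using y p by (intro divide_left_mono) (simp_all add: algebra_simps)
    also have "\<dots> \<le> 2 * x / (y * (y - 1) * (y + 1))" using x p by (intro divide_right_mono) simp_all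
    finally show "2 * x / (y * (y - 1) * (y + 1)) \<ge> 1 / y" .
  qed
  have "(b1\<^sup>2/(c*(c-1)) - b2\<^sup>2/(c'*(c'+1))) + (a1\<^sup>2/(c*(c-1)) - a2\<^sup>2/(c'*(c'+1)))
       + (b2\<^sup>2/(c'*(c'-1)) - b1\<^sup>2/(c*(c+1))) + (a2\<^sup>2/(c'*(c'-1)) - a1\<^sup>2/(c*(c+1)))
     = ((a1\<^sup>2 + b1\<^sup>2)/(c*(c-1)) - (a1\<^sup>2 + b1\<^sup>2)/(c*(c+1)))
       + ((a2\<^sup>2 + b2\<^sup>2)/(c'*(c'-1)) - (a2\<^sup>2 + b2\<^sup>2)/(c'*(c'+1)))" (is "?S = _")
    by (simp add: add_divide_distrib)
  also have "\<dots> = 2 * (a1\<^sup>2 + b1\<^sup>2) / (c * (c - 1) * (c + 1)) + 2 * (a2\<^sup>2 + b2\<^sup>2) / (c' * (c' - 1) * (c' + 1))"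
    using c by (simp add: id)
  also have "\<dots> \<ge> 1 / c + 1 / c'" using g[OF c(1) sq1] g[OF c(2) sq2] by linarith
  finally have s: "?S \<ge> 1 / c + 1 / c'" .
  have "4 / (c + c') \<le> 1 / c + 1 / c'"
  proof -
    have "4 * c * c' \<le> (c + c')\<^sup>2" using sum_squares_ge_zero[of "c - c'" 0] by (simp add: power2_eq_square algebra_simps)
    then show ?thesis using c by (simp add: field_simps power2_eq_square algebra_simps)
  qed
  with s show ?thesis by linarith
qed

lemma comb_main:
  fixes a1 b1 a2 b2 :: nat
  assumes h1: "a1 + b1 \<ge> 1" and h2: "a2 + b2 \<ge> 1" and h3: "a1 + a2 \<ge> 1" and h4: "b1 + b2 \<ge> 1"
    and h5: "\<not> (b1 = 0 \<and> a2 = 0)" and h6: "\<not> (a1 = 0 \<and> b2 = 0)" and h7: "a1 + b1 + a2 + b2 \<ge> 4"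
  defines "c \<equiv> real (a1 + b1)" and "c' \<equiv> real (a2 + b2)"
    and "r \<equiv> 4 * (real (min (a1 + a2) (b1 + b2)))\<^sup>2 / (real (a1 + b1) + real (a2 + b2)) ^ 3"
  shows "(a1 \<ge> 1 \<and> a1 + b1 \<ge> 2 \<and> (real b1)\<^sup>2/(c*(c-1)) - (real b2)\<^sup>2/(c'*(c'+1)) \<ge> r)
       \<or> (b1 \<ge> 1 \<and> a1 + b1 \<ge> 2 \<and> (real a1)\<^sup>2/(c*(c-1)) - (real a2)\<^sup>2/(c'*(c'+1)) \<ge> r)
       \<or> (a2 \<ge> 1 \<and> a2 + b2 \<ge> 2 \<and> (real b2)\<^sup>2/(c'*(c'-1)) - (real b1)\<^sup>2/(c*(c+1)) \<ge> r)
       \<or> (b2 \<ge> 1 \<and> a2 + b2 \<ge> 2 \<and> (real a2)\<^sup>2/(c'*(c'-1)) - (real a1)\<^sup>2/(c*(c+1)) \<ge> r)"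
proof -
  define m where "m = real (min (a1 + a2) (b1 + b2))"
  have N4: "c + c' \<ge> 4" using h7 by (simp add: c_def c'_def)
  have m0: "m \<ge> 0" by (simp add: m_def)
  have r_eq: "r = 4 * m\<^sup>2 / (c + c') ^ 3" by (simp add: r_def m_def c_def c'_def)
  have mn1: "m \<le> real a1 + real a2" "m \<le> real b1 + real b2" by (auto simp: m_def)
  consider (B2) "b2 = 0" | (A2) "a2 = 0" | (A1) "a1 = 0" | (B1) "b1 = 0" | (All) "a1 \<ge> 1" "b1 \<ge> 1" "a2 \<ge> 1" "b2 \<ge> 1"
    by linarith
  then show ?thesis
  proof cases
    case B2
    then have "a1 \<ge> 1" "b1 \<ge> 1" "a2 \<ge> 1" using h2 h4 h6 by auto
    moreover have "r \<le> (real b1)\<^sup>2/(c*(c-1)) - (real b2)\<^sup>2/(c'*(c'+1))"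
      unfolding r_eq using B2 calculation mn1 m0 N4
      by (simp) (rule comb_pure, auto simp: c_def c'_def)
    ultimately show ?thesis by auto
  next
    case A2
    then have "a1 \<ge> 1" "b1 \<ge> 1" "b2 \<ge> 1" using h3 h5 h2 by auto
    moreover have "r \<le> (real a1)\<^sup>2/(c*(c-1)) - (real a2)\<^sup>2/(c'*(c'+1))"
      unfolding r_eq using A2 calculation mn1 m0 N4
      by (simp) (rule comb_pure, auto simp: c_def c'_def)
    ultimately show ?thesis by auto
  next
    case A1
    then have "b1 \<ge> 1" "b2 \<ge> 1" "a2 \<ge> 1" using h1 h6 h3 by auto
    moreover have "r \<le> (real a2)\<^sup>2/(c'*(c'-1)) - (real a1)\<^sup>2/(c*(c+1))"
      unfolding r_eq using A1 calculation mn1 m0 N4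
      by (simp) (rule comb_pure, auto simp: c_def c'_def)
    ultimately show ?thesis by auto
  next
    case B1
    then have "a1 \<ge> 1" "a2 \<ge> 1" "b2 \<ge> 1" using h1 h5 h4 by auto
    moreover have "r \<le> (real b2)\<^sup>2/(c'*(c'-1)) - (real b1)\<^sup>2/(c*(c+1))"
      unfolding r_eq using B1 calculation mn1 m0 N4
      by (simp) (rule comb_pure, auto simp: c_def c'_def)
    ultimately show ?thesis by auto
  next
    case All
    have S: "((real b1)\<^sup>2/(c*(c-1)) - (real b2)\<^sup>2/(c'*(c'+1))) + ((real a1)\<^sup>2/(c*(c-1)) - (real a2)\<^sup>2/(c'*(c'+1)))
       + ((real b2)\<^sup>2/(c'*(c'-1)) - (real b1)\<^sup>2/(c*(c+1))) + ((real a2)\<^sup>2/(c'*(c'-1)) - (real a1)\<^sup>2/(c*(c+1))) \<ge> 4 / (c + c')"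
      unfolding c_def c'_def using All comb_mixed[of "real a1" "real b1" "real a2" "real b2"] by simp
    have rle: "r \<le> 1 / (c + c')"
    proof -
      have "2 * m \<le> c + c'" using mn1 by (simp add: c_def c'_def)
      then have "(2 * m)\<^sup>2 \<le> (c + c')\<^sup>2" using m0 by (intro power_mono) auto
      then have "4 * m\<^sup>2 \<le> (c + c')\<^sup>2" by (simp add: power_mult_distrib)
      then have "4 * m\<^sup>2 / (c + c') ^ 3 \<le> (c + c')\<^sup>2 / (c + c') ^ 3" using N4 by (intro divide_right_mono) auto
      also have "\<dots> = 1 / (c + c')" using N4 by (simp add: power2_eq_square power3_eq_cube)
      finally show ?thesis by (simp add: r_eq)
    qed
    have "\<not> (((real b1)\<^sup>2/(c*(c-1)) - (real b2)\<^sup>2/(c'*(c'+1))) < r \<and> ((real a1)\<^sup>2/(c*(c-1)) - (real a2)\<^sup>2/(c'*(c'+1))) < r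
       \<and> ((real b2)\<^sup>2/(c'*(c'-1)) - (real b1)\<^sup>2/(c*(c+1))) < r \<and> ((real a2)\<^sup>2/(c'*(c'-1)) - (real a1)\<^sup>2/(c*(c+1))) < r)"
      using S rle by linarith
    then show ?thesis using All by auto
  qed
qed


definition lw :: "(nat \<Rightarrow> nat) \<Rightarrow> nat \<Rightarrow> nat set \<Rightarrow> nat \<Rightarrow> real" where
  "lw z i C j = (if j = z i - 1 then 1 else 0) + (if j = i + 1 then 1 else 0)
     - (\<Sum>m\<in>C. (if j = z m - 1 then 1 else 0) + (if j = m + 1 then 1 else 0)) / real (card C)"

lemma sum_delta_mult:
  fixes f :: "nat \<Rightarrow> real"
  shows "a < N \<Longrightarrow> (\<Sum>j<N. (if j = a then 1 else 0) * f j) = f a"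
proof -
  assume a: "a < N"
  have "(\<Sum>j<N. (if j = a then 1 else 0) * f j) = (\<Sum>j<N. if j = a then f j else 0)"
    by (rule sum.cong) auto
  then show ?thesis using a by simp
qed

lemma lin_rep:
  fixes z :: "nat \<Rightarrow> nat" and \<omega> :: "nat \<times> nat \<Rightarrow> real"
  assumes i: "i \<in> {1..n}" and C: "C \<subseteq> {1..n}" and z: "\<forall>m\<in>{1..n}. z m \<in> {1, 2}"
  shows "obs z \<omega> i k - centroid (obs z \<omega>) C k = (\<Sum>j<n+2. lw z i C j * \<omega> (j,k))"
proof -
  have fin: "finite C" using C finite_subset by blast
  define N where "N = n + 2"
  have "z i \<in> {1, 2}" using z i by blast
  then have zi: "z i - 1 < N" "i + 1 < N" using i by (auto simp: N_def)
  have zm: "z m - 1 < n + 2 \<and> m + 1 < n + 2" if m: "m \<in> C" for m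
  proof -
    have "m \<in> {1..n}" using m C by blast
    then have "z m \<in> {1, 2}" "m \<le> n" using z by auto
    then show ?thesis by auto
  qed
  have pw: "lw z i C j * \<omega> (j,k) = (if j = z i - 1 then 1 else 0) * \<omega> (j,k) + (if j = i + 1 then 1 else 0) * \<omega> (j,k)
        - (\<Sum>m\<in>C. (if j = z m - 1 then 1 else 0) * \<omega> (j,k) + (if j = m + 1 then 1 else 0) * \<omega> (j,k)) / real (card C)" for j
    unfolding lw_def by (simp add: algebra_simps sum_distrib_left sum.distrib)
  have "(\<Sum>j<N. lw z i C j * \<omega> (j,k))
      = (\<Sum>j<N. (if j = z i - 1 then 1 else 0) * \<omega> (j,k)) + (\<Sum>j<N. (if j = i + 1 then 1 else 0) * \<omega> (j,k))
        - (\<Sum>j<N. (\<Sum>m\<in>C. (if j = z m - 1 then 1 else 0) * \<omega> (j,k) + (if j = m + 1 then 1 else 0) * \<omega> (j,k))) / real (card C)"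
    by (simp add: pw sum_subtractf sum.distrib sum_divide_distrib add_divide_distrib)
  also have "(\<Sum>j<N. (\<Sum>m\<in>C. (if j = z m - 1 then 1 else 0) * \<omega> (j,k) + (if j = m + 1 then 1 else 0) * \<omega> (j,k)))
      = (\<Sum>m\<in>C. \<omega> (z m - 1, k) + \<omega> (m + 1, k))"
  proof (subst sum.swap, rule sum.cong[OF refl])
    fix m assume m: "m \<in> C"
    have "z m - 1 < N" "m + 1 < N" using zm[OF m] by (auto simp: N_def)
    then show "(\<Sum>j<N. (if j = z m - 1 then 1 else 0) * \<omega> (j, k) + (if j = m + 1 then 1 else 0) * \<omega> (j, k)) = \<omega> (z m - 1, k) + \<omega> (m + 1, k)"
      by (simp add: sum.distrib sum_delta_mult)
  qed
  also have "(\<Sum>j<N. (if j = z i - 1 then 1 else 0) * \<omega> (j,k)) = \<omega> (z i - 1, k)"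
    using zi by (simp add: sum_delta_mult)
  also have "(\<Sum>j<N. (if j = i + 1 then 1 else 0) * \<omega> (j,k)) = \<omega> (i + 1, k)"
    using zi by (simp add: sum_delta_mult)
  finally show ?thesis
    by (simp add: N_def obs_def centroid_def sum.distrib)
qed

lemma sum_split_n2:
  fixes f :: "nat \<Rightarrow> real"
  shows "(\<Sum>j<n+2. f j) = f 0 + f 1 + (\<Sum>m\<in>{1..n}. f (m + 1))"
proof -
  have "(\<Sum>j<Suc (Suc n). f j) = f 0 + (f 1 + (\<Sum>i<n. f (Suc (Suc i))))"
    by (simp only: sum.lessThan_Suc_shift) simp
  also have "(\<Sum>i<n. f (Suc (Suc i))) = (\<Sum>m\<in>Suc ` {..<n}. f (Suc m))"
    by (subst sum.reindex) auto
  also have "Suc ` {..<n} = {1..n}" by (rule image_Suc_lessThan)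
  finally show ?thesis by simp
qed

lemma lw_0:
  assumes C: "C \<subseteq> {1..n}" and z: "\<forall>m\<in>{1..n}. z m \<in> {1, 2}" and i: "i \<in> {1..n}"
  shows "lw z i C 0 = (if z i = 1 then 1 else 0) - real (card {m\<in>C. z m = 1}) / real (card C)"
proof -
  have fin: "finite C" using C finite_subset by blast
  have "(\<Sum>m\<in>C. (if 0 = z m - 1 then 1 else 0) + (if (0::nat) = m + 1 then 1 else 0) :: real)
      = (\<Sum>m\<in>C. if z m = 1 then 1 else 0)"
  proof (rule sum.cong[OF refl])
    fix m assume "m \<in> C" then have "z m \<in> {1,2}" using C z by blast
    then show "(if 0 = z m - 1 then 1 else 0) + (if (0::nat) = m + 1 then 1 else 0) = (if z m = 1 then 1 else (0::real))" by auto
  qed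
  also have "\<dots> = real (card {m\<in>C. z m = 1})" using fin by (simp add: sum.If_cases Int_def conj_commute)
  finally have e: "(\<Sum>m\<in>C. (if 0 = z m - 1 then 1 else 0) + (if (0::nat) = m + 1 then 1 else 0) :: real) = real (card {m\<in>C. z m = 1})" .
  have "z i \<in> {1,2}" using z i by blast
  then have "(if (0::nat) = z i - 1 then 1 else 0) + (if (0::nat) = i + 1 then 1 else 0) = (if z i = 1 then 1 else (0::real))" by auto
  then show ?thesis unfolding lw_def e by simp
qed

lemma lw_1:
  assumes C: "C \<subseteq> {1..n}" and z: "\<forall>m\<in>{1..n}. z m \<in> {1, 2}" and i: "i \<in> {1..n}"
  shows "lw z i C 1 = (if z i = 2 then 1 else 0) - real (card {m\<in>C. z m = 2}) / real (card C)"
proof -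
  have fin: "finite C" using C finite_subset by blast
  have "(\<Sum>m\<in>C. (if 1 = z m - 1 then 1 else 0) + (if (1::nat) = m + 1 then 1 else 0) :: real)
      = (\<Sum>m\<in>C. if z m = 2 then 1 else 0)"
  proof (rule sum.cong[OF refl])
    fix m assume "m \<in> C" then have "z m \<in> {1,2}" "m \<ge> 1" using C z by auto
    then show "(if 1 = z m - 1 then 1 else 0) + (if (1::nat) = m + 1 then 1 else 0) = (if z m = 2 then 1 else (0::real))" by auto
  qed
  also have "\<dots> = real (card {m\<in>C. z m = 2})" using fin by (simp add: sum.If_cases Int_def conj_commute)
  finally have e: "(\<Sum>m\<in>C. (if 1 = z m - 1 then 1 else 0) + (if (1::nat) = m + 1 then 1 else 0) :: real) = real (card {m\<in>C. z m = 2})" .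
  have "z i \<in> {1,2}" "i \<ge> 1" using z i by auto
  then have "(if (1::nat) = z i - 1 then 1 else 0) + (if (1::nat) = i + 1 then 1 else 0) = (if z i = 2 then 1 else (0::real))" by auto
  then show ?thesis unfolding lw_def e by simp
qed

lemma lw_noise:
  assumes C: "C \<subseteq> {1..n}" and z: "\<forall>m\<in>{1..n}. z m \<in> {1, 2}" and i: "i \<in> {1..n}" and m0: "m0 \<in> {1..n}"
  shows "lw z i C (m0 + 1) = (if m0 = i then 1 else 0) - (if m0 \<in> C then 1 else 0) / real (card C)"
proof -
  have fin: "finite C" using C finite_subset by blast
  have "(\<Sum>m\<in>C. (if m0 + 1 = z m - 1 then 1 else 0) + (if m0 + 1 = m + 1 then 1 else 0) :: real)
      = (\<Sum>m\<in>C. if m = m0 then 1 else 0)"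
  proof (rule sum.cong[OF refl])
    fix m assume "m \<in> C" then have "z m \<in> {1,2}" using C z by auto
    then show "(if m0 + 1 = z m - 1 then 1 else 0) + (if m0 + 1 = m + 1 then 1 else 0) = (if m = m0 then 1 else (0::real))"
      using m0 by auto
  qed
  also have "\<dots> = (if m0 \<in> C then 1 else 0)" using fin by (simp add: sum.delta')
  finally have e: "(\<Sum>m\<in>C. (if m0 + 1 = z m - 1 then 1 else 0) + (if m0 + 1 = m + 1 then 1 else 0) :: real) = (if m0 \<in> C then 1 else 0)" .
  have "z i \<in> {1,2}" using z i by auto
  then have "(if m0 + 1 = z i - 1 then 1 else 0) + (if m0 + 1 = i + 1 then 1 else 0) = (if m0 = i then 1 else (0::real))"
    using m0 by auto
  then show ?thesis unfolding lw_def e by simp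
qed

lemma var_form:
  fixes \<tau> \<sigma> :: real
  assumes C: "C \<subseteq> {1..n}" and Cne: "C \<noteq> {}" and z: "\<forall>m\<in>{1..n}. z m \<in> {1, 2}" and i: "i \<in> {1..n}"
  shows "(\<Sum>j<n+2. (lw z i C j * (if j < 2 then \<tau> else \<sigma>))\<^sup>2)
       = \<tau>\<^sup>2 * (2 * (real (card {m\<in>C. z m \<noteq> z i}))\<^sup>2 / (real (card C))\<^sup>2)
         + \<sigma>\<^sup>2 * (1 - 2 * (if i \<in> C then 1 else 0) / real (card C) + 1 / real (card C))"
proof -
  have fin: "finite C" using C finite_subset by blast
  define c where "c = real (card C)"
  have c: "c > 0" using fin Cne by (simp add: c_def card_gt_0_iff)
  define p1 where "p1 = real (card {m\<in>C. z m = 1})"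
  define p2 where "p2 = real (card {m\<in>C. z m = 2})"
  have p12: "p1 + p2 = c"
  proof -
    have "C = {m\<in>C. z m = 1} \<union> {m\<in>C. z m = 2}" using C z by auto
    moreover have "{m\<in>C. z m = 1} \<inter> {m\<in>C. z m = 2} = {}" by auto
    ultimately have "card C = card {m\<in>C. z m = 1} + card {m\<in>C. z m = 2}"
      using fin by (metis (no_types, lifting) card_Un_disjoint finite_Un)
    then show ?thesis by (simp add: p1_def p2_def c_def)
  qed
  have zi: "z i \<in> {1,2}" using z i by blast
  have center: "(lw z i C 0 * \<tau>)\<^sup>2 + (lw z i C 1 * \<tau>)\<^sup>2
      = \<tau>\<^sup>2 * (2 * (real (card {m\<in>C. z m \<noteq> z i}))\<^sup>2 / c\<^sup>2)"
  proof (cases "z i = 1")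
    case True
    have q: "{m\<in>C. z m \<noteq> z i} = {m\<in>C. z m = 2}" using True C z by auto
    have "lw z i C 0 = p2 / c" using lw_0[OF C z i] True p12 c by (simp add: p1_def c_def field_simps)
    moreover have "lw z i C 1 = - p2 / c" using lw_1[OF C z i] True by (simp add: p2_def c_def)
    ultimately show ?thesis unfolding q p2_def[symmetric] by (simp add: power_mult_distrib power_divide)
  next
    case False
    then have z2: "z i = 2" using zi by auto
    have q: "{m\<in>C. z m \<noteq> z i} = {m\<in>C. z m = 1}" using z2 C z by auto
    have "lw z i C 0 = - p1 / c" using lw_0[OF C z i] z2 by (simp add: p1_def c_def)
    moreover have "lw z i C 1 = p1 / c" using lw_1[OF C z i] z2 p12 c by (simp add: p2_def c_def field_simps)
    ultimately show ?thesis unfolding q p1_def[symmetric] by (simp add: power_mult_distrib power_divide)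
  qed
  have noise: "(\<Sum>m\<in>{1..n}. (lw z i C (m + 1) * \<sigma>)\<^sup>2)
      = \<sigma>\<^sup>2 * (1 - 2 * (if i \<in> C then 1 else 0) / c + 1 / c)"
  proof -
    have "(\<Sum>m\<in>{1..n}. (lw z i C (m + 1) * \<sigma>)\<^sup>2)
        = \<sigma>\<^sup>2 * (\<Sum>m\<in>{1..n}. (if m = i then 1 else 0) - 2 * ((if m = i then 1 else 0) * (if m \<in> C then 1 else 0)) / c
                                 + (if m \<in> C then 1 else 0) / c\<^sup>2)"
      unfolding sum_distrib_left
    proof (rule sum.cong[OF refl])
      fix m assume m: "m \<in> {1..n}"
      show "(lw z i C (m + 1) * \<sigma>)\<^sup>2 = \<sigma>\<^sup>2 * ((if m = i then 1 else 0) - 2 * ((if m = i then 1 else 0) * (if m \<in> C then 1 else 0)) / c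
                                 + (if m \<in> C then 1 else 0) / c\<^sup>2)"
        unfolding lw_noise[OF C z i m] c_def[symmetric]
        using c by (cases "m = i"; cases "m \<in> C") (simp_all add: power2_eq_square field_simps)
    qed
    also have "(\<Sum>m\<in>{1..n}. (if m = i then 1 else 0) - 2 * ((if m = i then 1 else 0) * (if m \<in> C then 1 else 0)) / c
                                 + (if m \<in> C then 1 else 0) / c\<^sup>2)
        = 1 - 2 * (if i \<in> C then 1 else 0) / c + c / c\<^sup>2"
    proof -
      have s1: "(\<Sum>m\<in>{1..n}. (if m = i then 1 else 0 :: real)) = 1" using i by (simp add: sum.delta')
      have s2: "(\<Sum>m\<in>{1..n}. 2 * ((if m = i then 1 else 0) * (if m \<in> C then 1 else 0)) / c)
               = 2 * (if i \<in> C then 1 else 0) / c"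
      proof -
        have "(\<Sum>m\<in>{1..n}. 2 * ((if m = i then 1 else 0) * (if m \<in> C then 1 else 0)) / c)
            = (\<Sum>m\<in>{1..n}. if m = i then 2 * (if i \<in> C then 1 else 0) / c else 0)"
          by (rule sum.cong) auto
        then show ?thesis using i by (simp add: sum.delta')
      qed
      have s3: "(\<Sum>m\<in>{1..n}. (if m \<in> C then 1 else 0) / c\<^sup>2) = c / c\<^sup>2"
      proof -
        have "(\<Sum>m\<in>{1..n}. (if m \<in> C then 1 else 0) / c\<^sup>2) = (\<Sum>m\<in>{1..n}. (if m \<in> C then 1 else 0)) / c\<^sup>2"
          by (simp add: sum_divide_distrib)
        also have "(\<Sum>m\<in>{1..n}. (if m \<in> C then 1 else 0 :: real)) = c"
        proof -
          have "{1..n} \<inter> C = C" "C \<inter> {1..n} = C" using C by blast+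
          then show ?thesis by (simp add: sum.If_cases c_def)
        qed
        finally show ?thesis .
      qed
      show ?thesis by (simp only: sum.distrib sum_subtractf s1 s2 s3)
    qed
    also have "c / c\<^sup>2 = 1 / c" using c by (simp add: power2_eq_square)
    finally show ?thesis .
  qed
  show ?thesis
    unfolding sum_split_n2 c_def[symmetric]
    using center noise by simp
qed


lemma final_ineq:
  fixes \<tau> \<sigma> r Aa Bb :: real
  assumes t: "\<tau> > 0" and s: "\<sigma> > 0" and r0: "0 < r" and r1: "r \<le> 1"
    and Aup: "Aa \<le> \<sigma>\<^sup>2 + 2 * \<tau>\<^sup>2" and Bpos: "Bb > 0" and D: "Aa - Bb \<ge> 2 * \<tau>\<^sup>2 * r"
  shows "1 / (1 + (Aa - Bb)\<^sup>2 / (4 * Aa * Bb)) \<le> 1 - (\<tau>\<^sup>2 * r / (3 * \<tau>\<^sup>2 + \<sigma>\<^sup>2))\<^sup>2"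
proof -
  define G where "G = \<sigma>\<^sup>2 + 2 * \<tau>\<^sup>2"
  define K where "K = 3 * \<tau>\<^sup>2 + \<sigma>\<^sup>2"
  define P where "P = \<tau>\<^sup>2 * r"
  define x where "x = P / K"
  define y where "y = (Aa - Bb)\<^sup>2 / (4 * Aa * Bb)"
  have t2: "\<tau>\<^sup>2 > 0" using t by simp
  have Ppos: "P > 0" using t2 r0 by (simp add: P_def)
  have Gpos: "G > 0" using t s by (simp add: G_def add_pos_pos)
  have KG: "K > G" using t2 by (simp add: K_def G_def)
  have Kpos: "K > 0" using KG Gpos by simp
  have Apos: "Aa > Bb" using D t2 r0 by (smt (verit) mult_pos_pos)
  have AB: "Aa * Bb \<le> G\<^sup>2"
  proof -
    have "Aa * Bb \<le> G * G" using Apos Bpos Aup unfolding G_def[symmetric]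
      by (intro mult_mono) auto
    then show ?thesis by (simp add: power2_eq_square)
  qed
  have ABpos: "Aa * Bb > 0" using Apos Bpos by simp
  have Dsq: "(Aa - Bb)\<^sup>2 \<ge> (2 * P)\<^sup>2" using D Ppos by (intro power_mono) (auto simp: P_def)
  have ylow: "y \<ge> P\<^sup>2 / G\<^sup>2"
  proof -
    have "P\<^sup>2 / G\<^sup>2 = (2 * P)\<^sup>2 / (4 * G\<^sup>2)" by (simp add: power_mult_distrib)
    also have "\<dots> \<le> (Aa - Bb)\<^sup>2 / (4 * G\<^sup>2)" using Dsq Gpos by (intro divide_right_mono) auto
    also have "\<dots> \<le> (Aa - Bb)\<^sup>2 / (4 * (Aa * Bb))" using AB ABpos Gpos by (intro divide_left_mono) (auto simp: mult_pos_pos)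
    finally show ?thesis by (simp add: y_def mult.assoc)
  qed
  have y0: "y \<ge> 0" unfolding y_def using ABpos by simp
  have KK: "K\<^sup>2 - P\<^sup>2 \<ge> G\<^sup>2"
  proof -
    have "P \<le> \<tau>\<^sup>2" using r1 t2 by (simp add: P_def mult_left_le)
    then have "P\<^sup>2 \<le> (\<tau>\<^sup>2)\<^sup>2" using Ppos by (intro power_mono) auto
    moreover have "K\<^sup>2 - G\<^sup>2 = \<tau>\<^sup>2 * (5 * \<tau>\<^sup>2 + 2 * \<sigma>\<^sup>2)"
      by (simp add: K_def G_def power2_eq_square algebra_simps)
    moreover have "\<tau>\<^sup>2 * (5 * \<tau>\<^sup>2 + 2 * \<sigma>\<^sup>2) \<ge> (\<tau>\<^sup>2)\<^sup>2"
    proof -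
      have e: "\<tau>\<^sup>2 * (5 * \<tau>\<^sup>2 + 2 * \<sigma>\<^sup>2) = (\<tau>\<^sup>2)\<^sup>2 + \<tau>\<^sup>2 * (4 * \<tau>\<^sup>2 + 2 * \<sigma>\<^sup>2)"
        by (simp add: power2_eq_square algebra_simps)
      have "\<tau>\<^sup>2 * (4 * \<tau>\<^sup>2 + 2 * \<sigma>\<^sup>2) \<ge> 0" using t2 by (intro mult_nonneg_nonneg) auto
      then show ?thesis using e by linarith
    qed
    ultimately show ?thesis by linarith
  qed
  have x2: "x\<^sup>2 = P\<^sup>2 / K\<^sup>2" by (simp add: x_def power_divide)
  have x1: "1 - x\<^sup>2 \<ge> G\<^sup>2 / K\<^sup>2"
  proof -
    have "1 - x\<^sup>2 = (K\<^sup>2 - P\<^sup>2) / K\<^sup>2" using Kpos by (simp add: x2 field_simps)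
    also have "\<dots> \<ge> G\<^sup>2 / K\<^sup>2" using KK Kpos by (intro divide_right_mono) auto
    finally show ?thesis .
  qed
  have "y * (1 - x\<^sup>2) \<ge> (P\<^sup>2 / G\<^sup>2) * (G\<^sup>2 / K\<^sup>2)"
    using ylow x1 Gpos Kpos y0 by (intro mult_mono) auto
  also have "(P\<^sup>2 / G\<^sup>2) * (G\<^sup>2 / K\<^sup>2) = x\<^sup>2" using Gpos by (simp add: x2)
  finally have key: "y * (1 - x\<^sup>2) \<ge> x\<^sup>2" .
  have "1 \<le> (1 + y) * (1 - x\<^sup>2)" using key by (simp add: algebra_simps)
  then have "1 / (1 + y) \<le> 1 - x\<^sup>2" using y0 by (simp add: field_simps)
  then show ?thesis by (simp add: y_def x_def P_def K_def)
qed

lemma key_case: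
  fixes n d mm :: nat and \<tau> \<sigma> :: real and z :: "nat \<Rightarrow> nat" and C C' :: "nat set" and i :: nat
  assumes n4: "n \<ge> 4" and d1: "d \<ge> 1" and t: "\<tau> > 0" and s: "\<sigma> > 0"
    and z: "\<forall>i\<in>{1..n}. z i \<in> {1, 2}"
    and CU: "C \<union> C' = {1..n}" and CI: "C \<inter> C' = {}" and C'ne: "C' \<noteq> {}"
    and i: "i \<in> C" and c2: "card C \<ge> 2"
    and mm: "1 \<le> mm" "mm \<le> n"
    and \<delta>: "(real (card {m\<in>C. z m \<noteq> z i}))\<^sup>2 / (real (card C) * (real (card C) - 1))
            - (real (card {m\<in>C'. z m \<noteq> z i}))\<^sup>2 / (real (card C') * (real (card C') + 1))
          \<ge> 4 * (real mm)\<^sup>2 / (real (card C) + real (card C')) ^ 3"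
    and Hsub: "H \<subseteq> {\<omega> \<in> space (gmm_measure n d \<tau> \<sigma>). hartigan_dist d (obs z \<omega>) i C \<le> hartigan_dist d (obs z \<omega>) i C'}"
  shows "measure (gmm_measure n d \<tau> \<sigma>) H
         \<le> (1 - (4 * \<tau>^2 * (real mm / real n)^2 / real n / (3 * \<tau>^2 + \<sigma>^2))^2) powr (real d / 4)"
proof -
  define sd where "sd = (\<lambda>j::nat. if j < 2 then \<tau> else \<sigma>)"
  interpret gprod2 "{..<n+2}" "{..<d}" sd
    by unfold_locales (use d1 t s in \<open>auto simp: sd_def lessThan_empty_iff\<close>)
  have Meq: "gmm_measure n d \<tau> \<sigma> = M" unfolding gmm_measure_def G.MM_def
    by (intro PiM_cong) (auto simp: sd_def)
  have CC: "C \<subseteq> {1..n}" "C' \<subseteq> {1..n}" using CU by auto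
  have fin: "finite C" "finite C'" using CC finite_subset by blast+
  have Cne: "C \<noteq> {}" using i by auto
  have iN: "i \<in> {1..n}" using i CC by auto
  have iC': "i \<notin> C'" using i CI by auto
  have ncard: "card C + card C' = n" using card_Un_disjoint[OF fin CI] CU by simp
  define c where "c = real (card C)"
  define c' where "c' = real (card C')"
  define q where "q = real (card {m\<in>C. z m \<noteq> z i})"
  define q' where "q' = real (card {m\<in>C'. z m \<noteq> z i})"
  define r where "r = 4 * (real mm)\<^sup>2 / (real n) ^ 3"
  have c2': "c \<ge> 2" using c2 by (simp add: c_def)
  have c'1: "c' \<ge> 1" using C'ne fin by (simp add: c'_def Suc_le_eq card_gt_0_iff)
  have nreal: "c + c' = real n" using ncard by (simp add: c_def c'_def flip: of_nat_add)
  have \<delta>': "q\<^sup>2 / (c * (c - 1)) - q'\<^sup>2 / (c' * (c' + 1)) \<ge> r"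
    using \<delta> unfolding r_def nreal[symmetric] by (simp add: c_def c'_def q_def q'_def)
  have qle: "q \<le> c - 1"
  proof -
    have "{m\<in>C. z m \<noteq> z i} \<subseteq> C - {i}" by auto
    then have "card {m\<in>C. z m \<noteq> z i} \<le> card (C - {i})" using fin by (intro card_mono) auto
    also have "card (C - {i}) = card C - 1" using i fin by simp
    finally show ?thesis using c2 by (simp add: q_def c_def of_nat_diff)
  qed
  have q0: "q \<ge> 0" "q' \<ge> 0" by (simp_all add: q_def q'_def)
  define a where "a = lw z i C"
  define b where "b = lw z i C'"
  define \<alpha> where "\<alpha> = c / (c - 1)"
  define \<beta> where "\<beta> = c' / (c' + 1)"
  have \<alpha>: "\<alpha> > 0" using c2' by (simp add: \<alpha>_def)
  have \<beta>: "\<beta> > 0" using c'1 by (simp add: \<beta>_def)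
  have setEq: "{\<omega> \<in> space M. hartigan_dist d (obs z \<omega>) i C \<le> hartigan_dist d (obs z \<omega>) i C'}
      = {\<omega>\<in>space M. \<alpha> * (\<Sum>k\<in>{..<d}. (\<Sum>j\<in>{..<n+2}. a j * \<omega> (j,k))\<^sup>2)
                                   \<le> \<beta> * (\<Sum>k\<in>{..<d}. (\<Sum>j\<in>{..<n+2}. b j * \<omega> (j,k))\<^sup>2)}"
  proof -
    have h1: "hartigan_dist d (obs z \<omega>) i C = \<alpha> * (\<Sum>k\<in>{..<d}. (\<Sum>j\<in>{..<n+2}. a j * \<omega> (j,k))\<^sup>2)" for \<omega>
      unfolding hartigan_dist_def sqdist_def using i
      by (simp add: lin_rep[OF iN CC(1) z] a_def \<alpha>_def c_def)
    have h2: "hartigan_dist d (obs z \<omega>) i C' = \<beta> * (\<Sum>k\<in>{..<d}. (\<Sum>j\<in>{..<n+2}. b j * \<omega> (j,k))\<^sup>2)" for \<omega>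
      unfolding hartigan_dist_def sqdist_def using iC'
      by (simp add: lin_rep[OF iN CC(2) z] b_def \<beta>_def c'_def)
    show ?thesis unfolding h1 h2 ..
  qed
  have Va: "(\<Sum>j\<in>{..<n+2}. (a j * sd j)\<^sup>2) = \<tau>\<^sup>2 * (2 * q\<^sup>2 / c\<^sup>2) + \<sigma>\<^sup>2 * ((c - 1) / c)"
  proof -
    have "(\<Sum>j\<in>{..<n+2}. (a j * sd j)\<^sup>2) = \<tau>\<^sup>2 * (2 * q\<^sup>2 / c\<^sup>2) + \<sigma>\<^sup>2 * (1 - 2 * 1 / c + 1 / c)"
      using var_form[OF CC(1) Cne z iN, of \<tau> \<sigma>] i by (simp add: a_def sd_def q_def c_def)
    also have "1 - 2 * 1 / c + 1 / c = (c - 1) / c" using c2' by (simp add: field_simps)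
    finally show ?thesis .
  qed
  have Vb: "(\<Sum>j\<in>{..<n+2}. (b j * sd j)\<^sup>2) = \<tau>\<^sup>2 * (2 * q'\<^sup>2 / c'\<^sup>2) + \<sigma>\<^sup>2 * ((c' + 1) / c')"
  proof -
    have "(\<Sum>j\<in>{..<n+2}. (b j * sd j)\<^sup>2) = \<tau>\<^sup>2 * (2 * q'\<^sup>2 / c'\<^sup>2) + \<sigma>\<^sup>2 * (1 - 2 * 0 / c' + 1 / c')"
      using var_form[OF CC(2) C'ne z iN, of \<tau> \<sigma>] iC' by (simp add: b_def sd_def q'_def c'_def)
    also have "1 - 2 * 0 / c' + 1 / c' = (c' + 1) / c'" using c'1 by (simp add: field_simps)
    finally show ?thesis .
  qed
  define Aa where "Aa = \<alpha> * (\<Sum>j\<in>{..<n+2}. (a j * sd j)\<^sup>2)"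
  define Bb where "Bb = \<beta> * (\<Sum>j\<in>{..<n+2}. (b j * sd j)\<^sup>2)"
  have Aa: "Aa = \<sigma>\<^sup>2 + 2 * \<tau>\<^sup>2 * (q\<^sup>2 / (c * (c - 1)))"
    unfolding Aa_def Va \<alpha>_def using c2' by (simp add: field_simps power2_eq_square)
  have Bb: "Bb = \<sigma>\<^sup>2 + 2 * \<tau>\<^sup>2 * (q'\<^sup>2 / (c' * (c' + 1)))"
  proof -
    have cp: "c' > 0" using c'1 by simp
    have nz: "c' \<noteq> 0" "c' + 1 \<noteq> 0" "c' + c' * c' \<noteq> 0" "c' * c' + c' * (c' * c') \<noteq> 0"
      using cp by (auto simp: add_pos_pos) (metis add_pos_pos cp mult_pos_pos less_irrefl)+
    have e1: "c' / (c' + 1) * (\<tau>\<^sup>2 * (2 * q'\<^sup>2 / c'\<^sup>2)) = 2 * \<tau>\<^sup>2 * (q'\<^sup>2 / (c' * (c' + 1)))"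
      using nz by (simp add: field_simps power2_eq_square)
    have e2: "c' / (c' + 1) * (\<sigma>\<^sup>2 * ((c' + 1) / c')) = \<sigma>\<^sup>2"
      using nz by (simp add: field_simps)
    show ?thesis unfolding Bb_def Vb \<beta>_def distrib_left e1 e2 by simp
  qed
  have r0: "r > 0" using mm n4 by (simp add: r_def)
  have r1: "r \<le> 1"
  proof -
    have "(real mm)\<^sup>2 \<le> (real n)\<^sup>2" using mm by (simp add: power_mono)
    then have "4 * (real mm)\<^sup>2 \<le> 4 * (real n)\<^sup>2" by simp
    also have "4 * (real n)\<^sup>2 \<le> real n * (real n)\<^sup>2" using n4 by (intro mult_right_mono) auto
    also have "\<dots> = (real n) ^ 3" by (simp add: power2_eq_square power3_eq_cube)
    finally show ?thesis using n4 by (simp add: r_def)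
  qed
  have Bpos: "Bb > 0" unfolding Bb using s c'1 q0
    by (intro add_pos_nonneg) (auto intro!: mult_nonneg_nonneg divide_nonneg_pos)
  have Dge: "Aa - Bb \<ge> 2 * \<tau>\<^sup>2 * r"
  proof -
    have "Aa - Bb = 2 * \<tau>\<^sup>2 * (q\<^sup>2 / (c * (c - 1)) - q'\<^sup>2 / (c' * (c' + 1)))"
      unfolding Aa Bb by (simp add: algebra_simps)
    also have "\<dots> \<ge> 2 * \<tau>\<^sup>2 * r" using \<delta>' t by (intro mult_left_mono) auto
    finally show ?thesis .
  qed
  have AB: "Bb < Aa" using Dge r0 t by (smt (verit) mult_pos_pos zero_less_power)
  have Aup: "Aa \<le> \<sigma>\<^sup>2 + 2 * \<tau>\<^sup>2"
  proof -
    have cc: "c * (c - 1) > 0" using c2' by simp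
    have "q\<^sup>2 \<le> (c - 1)\<^sup>2" using qle q0 by (intro power_mono) auto
    also have "\<dots> \<le> c * (c - 1)" using c2' by (simp add: power2_eq_square mult_right_mono)
    finally have "q\<^sup>2 / (c * (c - 1)) \<le> 1" using cc by simp
    then have "2 * \<tau>\<^sup>2 * (q\<^sup>2 / (c * (c - 1))) \<le> 2 * \<tau>\<^sup>2 * 1" by (intro mult_left_mono) auto
    then show ?thesis unfolding Aa by linarith
  qed
  have nz: "\<exists>j\<in>{..<n+2}. w j \<noteq> 0" if pos: "(\<Sum>j\<in>{..<n+2}. (w j * sd j)\<^sup>2) > 0" for w
  proof (rule ccontr)
    assume "\<not> ?thesis"
    then have "(\<Sum>j\<in>{..<n+2}. (w j * sd j)\<^sup>2) = 0" by simp
    with pos show False by simp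
  qed
  have Vapos: "(\<Sum>j\<in>{..<n+2}. (a j * sd j)\<^sup>2) > 0"
    unfolding Va using c2' s q0 by (intro add_nonneg_pos) (auto intro!: mult_nonneg_nonneg divide_nonneg_pos)
  have Vbpos: "(\<Sum>j\<in>{..<n+2}. (b j * sd j)\<^sup>2) > 0"
    unfolding Vb using c'1 s q0 by (intro add_nonneg_pos) (auto intro!: mult_nonneg_nonneg divide_nonneg_pos)
  have ch: "emeasure M {\<omega>\<in>space M. \<alpha> * (\<Sum>k\<in>{..<d}. (\<Sum>j\<in>{..<n+2}. a j * \<omega> (j,k))\<^sup>2)
                                   \<le> \<beta> * (\<Sum>k\<in>{..<d}. (\<Sum>j\<in>{..<n+2}. b j * \<omega> (j,k))\<^sup>2)}
         \<le> ennreal ((1 / (1 + (Aa - Bb)\<^sup>2 / (4 * Aa * Bb))) powr (real (card {..<d}) / 4))"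
    by (rule chernoff_two[OF nz[OF Vapos] nz[OF Vbpos] \<alpha> \<beta> Aa_def Bb_def AB])
  define bnd where "bnd = 1 / (1 + (Aa - Bb)\<^sup>2 / (4 * Aa * Bb))"
  have bnd0: "bnd > 0" using AB Bpos unfolding bnd_def
    by (intro divide_pos_pos add_pos_nonneg) (auto intro!: divide_nonneg_pos)
  have bndle: "bnd \<le> 1 - (\<tau>\<^sup>2 * r / (3 * \<tau>\<^sup>2 + \<sigma>\<^sup>2))\<^sup>2"
    unfolding bnd_def by (rule final_ineq[OF t s r0 r1 Aup Bpos Dge])
  have xeq: "\<tau>\<^sup>2 * r = 4 * \<tau>^2 * (real mm / real n)^2 / real n"
    using n4 by (simp add: r_def power_divide power2_eq_square power3_eq_cube)
  have "measure M {\<omega> \<in> space M. hartigan_dist d (obs z \<omega>) i C \<le> hartigan_dist d (obs z \<omega>) i C'}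
      \<le> bnd powr (real d / 4)"
    unfolding setEq measure_def using ch bnd0 by (intro enn2real_leI) (simp_all add: bnd_def)
  also have "\<dots> \<le> (1 - (4 * \<tau>^2 * (real mm / real n)^2 / real n / (3 * \<tau>^2 + \<sigma>^2))^2) powr (real d / 4)"
    using bndle bnd0 unfolding xeq by (intro powr_mono2) auto
  finally have main: "measure M {\<omega> \<in> space M. hartigan_dist d (obs z \<omega>) i C \<le> hartigan_dist d (obs z \<omega>) i C'}
      \<le> (1 - (4 * \<tau>^2 * (real mm / real n)^2 / real n / (3 * \<tau>^2 + \<sigma>^2))^2) powr (real d / 4)" .
  have Kmeas: "{\<omega> \<in> space M. hartigan_dist d (obs z \<omega>) i C \<le> hartigan_dist d (obs z \<omega>) i C'} \<in> sets M"
    unfolding setEq using quad_meas[of a] quad_meas[of b] by measurable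
  interpret prob_space M by (rule Pspace)
  show ?thesis
  proof (cases "H \<in> sets M")
    case True
    have "measure M H \<le> measure M {\<omega> \<in> space M. hartigan_dist d (obs z \<omega>) i C \<le> hartigan_dist d (obs z \<omega>) i C'}"
      by (rule finite_measure_mono[OF _ Kmeas]) (use Hsub Meq in simp)
    then show ?thesis using main Meq by simp
  next
    case False
    then show ?thesis using Meq by (simp add: measure_notin_sets)
  qed
qed

lemma card_split2:
  assumes fin: "finite C" and z: "\<forall>m\<in>C. z m \<in> {1, 2::nat}"
  shows "card {m\<in>C. z m = 1} + card {m\<in>C. z m = 2} = card C"
proof -
  have "C = {m\<in>C. z m = 1} \<union> {m\<in>C. z m = 2}" using z by auto
  moreover have "{m\<in>C. z m = 1} \<inter> {m\<in>C. z m = 2} = {}" by auto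
  ultimately show ?thesis using fin
    by (metis (no_types, lifting) card_Un_disjoint finite_Un)
qed

theorem corollary3p11:
  fixes n d :: nat and \<tau> \<sigma> :: real and z :: "nat \<Rightarrow> nat" and C1 C2 :: "nat set"
  assumes "n \<ge> 4" and "d \<ge> 1" and "\<tau> > 0" and "\<sigma> > 0"
    and "\<forall>i\<in>{1..n}. z i \<in> {1, 2}"
    and "{i\<in>{1..n}. z i = 1} \<noteq> {}" and "{i\<in>{1..n}. z i = 2} \<noteq> {}"
    and "C1 \<union> C2 = {1..n}" and "C1 \<inter> C2 = {}" and "C1 \<noteq> {}" and "C2 \<noteq> {}"
    and "\<not> (C1 = {i\<in>{1..n}. z i = 1} \<and> C2 = {i\<in>{1..n}. z i = 2})"
    and "\<not> (C1 = {i\<in>{1..n}. z i = 2} \<and> C2 = {i\<in>{1..n}. z i = 1})"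
  shows "let R = real (min (card {i\<in>{1..n}. z i = 1}) (card {i\<in>{1..n}. z i = 2})) / real n;
             \<rho> = 1 - (4 * \<tau>^2 * R^2 / real n / (3 * \<tau>^2 + \<sigma>^2))^2
         in \<rho> < 1 \<and>
            measure (gmm_measure n d \<tau> \<sigma>)
              {\<omega> \<in> space (gmm_measure n d \<tau> \<sigma>). hartigan_fixed_point d (obs z \<omega>) C1 C2}
            \<le> \<rho> powr (real d / 4)"
proof -
  note n4 = assms(1) and d1 = assms(2) and t = assms(3) and s = assms(4) and z = assms(5)
    and S1ne = assms(6) and S2ne = assms(7) and CU = assms(8) and CI = assms(9)
    and C1ne = assms(10) and C2ne = assms(11) and inc1 = assms(12) and inc2 = assms(13)
  define S1 where "S1 = {i\<in>{1..n}. z i = 1}"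
  define S2 where "S2 = {i\<in>{1..n}. z i = 2}"
  define mm where "mm = min (card S1) (card S2)"
  define H where "H = {\<omega> \<in> space (gmm_measure n d \<tau> \<sigma>). hartigan_fixed_point d (obs z \<omega>) C1 C2}"
  define bound where "bound = (1 - (4 * \<tau>^2 * (real mm / real n)^2 / real n / (3 * \<tau>^2 + \<sigma>^2))^2) powr (real d / 4)"
  have CC: "C1 \<subseteq> {1..n}" "C2 \<subseteq> {1..n}" using CU by auto
  have fin: "finite C1" "finite C2" using CC finite_subset by blast+
  have finS: "finite S1" "finite S2" by (simp_all add: S1_def S2_def)
  have S1ne': "S1 \<noteq> {}" unfolding S1_def by (rule S1ne)
  have S2ne': "S2 \<noteq> {}" unfolding S2_def by (rule S2ne)
  have S1pos: "card S1 \<ge> 1" using S1ne' finS by (simp add: Suc_le_eq card_gt_0_iff)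
  have S2pos: "card S2 \<ge> 1" using S2ne' finS by (simp add: Suc_le_eq card_gt_0_iff)
  have mm1: "1 \<le> mm" using S1pos S2pos by (simp add: mm_def)
  have mmn: "mm \<le> n"
  proof -
    have "card S1 \<le> card {1..n}" using finS by (intro card_mono) (auto simp: S1_def)
    then show ?thesis by (simp add: mm_def)
  qed
  define a1 where "a1 = card {m\<in>C1. z m = 1}"
  define b1 where "b1 = card {m\<in>C1. z m = 2}"
  define a2 where "a2 = card {m\<in>C2. z m = 1}"
  define b2 where "b2 = card {m\<in>C2. z m = 2}"
  have zC1: "\<forall>m\<in>C1. z m \<in> {1, 2}" and zC2: "\<forall>m\<in>C2. z m \<in> {1, 2}" using z CC by auto
  have cardC1: "a1 + b1 = card C1" unfolding a1_def b1_def by (rule card_split2[OF fin(1) zC1])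
  have cardC2: "a2 + b2 = card C2" unfolding a2_def b2_def by (rule card_split2[OF fin(2) zC2])
  have cS1: "a1 + a2 = card S1"
  proof -
    have "S1 = {m\<in>C1. z m = 1} \<union> {m\<in>C2. z m = 1}" using CU by (auto simp: S1_def)
    moreover have "{m\<in>C1. z m = 1} \<inter> {m\<in>C2. z m = 1} = {}" using CI by auto
    ultimately show ?thesis using fin by (simp add: a1_def a2_def card_Un_disjoint)
  qed
  have cS2: "b1 + b2 = card S2"
  proof -
    have "S2 = {m\<in>C1. z m = 2} \<union> {m\<in>C2. z m = 2}" using CU by (auto simp: S2_def)
    moreover have "{m\<in>C1. z m = 2} \<inter> {m\<in>C2. z m = 2} = {}" using CI by auto
    ultimately show ?thesis using fin by (simp add: b1_def b2_def card_Un_disjoint)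
  qed
  have ncard: "card C1 + card C2 = n" using card_Un_disjoint[OF fin CI] CU by simp
  have h1: "a1 + b1 \<ge> 1" using cardC1 C1ne fin by (simp add: Suc_le_eq card_gt_0_iff)
  have h2: "a2 + b2 \<ge> 1" using cardC2 C2ne fin by (simp add: Suc_le_eq card_gt_0_iff)
  have h5: "\<not> (b1 = 0 \<and> a2 = 0)"
  proof
    assume "b1 = 0 \<and> a2 = 0"
    then have e: "{m\<in>C1. z m = 2} = {}" "{m\<in>C2. z m = 1} = {}" using fin by (auto simp: b1_def a2_def)
    have "C1 = S1" using e CC CU zC1 zC2 unfolding S1_def by blast
    moreover have "C2 = S2" using e CC CU zC1 zC2 unfolding S2_def by blast
    ultimately show False using inc1 by (simp add: S1_def S2_def)
  qed
  have h6: "\<not> (a1 = 0 \<and> b2 = 0)"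
  proof
    assume "a1 = 0 \<and> b2 = 0"
    then have e: "{m\<in>C1. z m = 1} = {}" "{m\<in>C2. z m = 2} = {}" using fin by (auto simp: a1_def b2_def)
    have "C1 = S2" using e CC CU zC1 zC2 unfolding S2_def by blast
    moreover have "C2 = S1" using e CC CU zC1 zC2 unfolding S1_def by blast
    ultimately show False using inc2 by (simp add: S1_def S2_def)
  qed
  have h7: "a1 + b1 + a2 + b2 \<ge> 4" using cardC1 cardC2 ncard n4 by simp
  have mmeq: "min (a1 + a2) (b1 + b2) = mm" by (simp add: cS1 cS2 mm_def)
  have h3: "a1 + a2 \<ge> 1" using cS1 S1pos by simp
  have h4: "b1 + b2 \<ge> 1" using cS2 S2pos by simp
  note cm = comb_main[OF h1 h2 h3 h4 h5 h6 h7, unfolded mmeq cardC1 cardC2]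
  have use_key: "measure (gmm_measure n d \<tau> \<sigma>) H \<le> bound"
    if i: "i \<in> C" and CC': "(C = C1 \<and> C' = C2) \<or> (C = C2 \<and> C' = C1)" and c2: "card C \<ge> 2"
      and \<delta>: "(real (card {m\<in>C. z m \<noteq> z i}))\<^sup>2 / (real (card C) * (real (card C) - 1))
            - (real (card {m\<in>C'. z m \<noteq> z i}))\<^sup>2 / (real (card C') * (real (card C') + 1))
          \<ge> 4 * (real mm)\<^sup>2 / (real (card C) + real (card C')) ^ 3"
    for i C C'
  proof -
    have CU': "C \<union> C' = {1..n}" and CI': "C \<inter> C' = {}" and C'ne: "C' \<noteq> {}"
      using CC' CU CI C1ne C2ne by auto
    have Hsub: "H \<subseteq> {\<omega> \<in> space (gmm_measure n d \<tau> \<sigma>). hartigan_dist d (obs z \<omega>) i C \<le> hartigan_dist d (obs z \<omega>) i C'}"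
      using CC' i c2 unfolding H_def hartigan_fixed_point_def by auto
    show ?thesis unfolding bound_def
      by (rule key_case[OF n4 d1 t s z CU' CI' C'ne i c2 mm1 mmn \<delta> Hsub])
  qed
  have comp1: "{m\<in>C. z m \<noteq> 1} = {m\<in>C. z m = 2}" "{m\<in>C. z m \<noteq> 2} = {m\<in>C. z m = 1}"
    if "C = C1 \<or> C = C2" for C using that zC1 zC2 by auto
  have cp11: "{m\<in>C1. z m \<noteq> 1} = {m\<in>C1. z m = 2}" "{m\<in>C1. z m \<noteq> 2} = {m\<in>C1. z m = 1}"
    and cp22: "{m\<in>C2. z m \<noteq> 1} = {m\<in>C2. z m = 2}" "{m\<in>C2. z m \<noteq> 2} = {m\<in>C2. z m = 1}"
    using comp1[of C1] comp1[of C2] by auto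
  have mainb: "measure (gmm_measure n d \<tau> \<sigma>) H \<le> bound"
  proof -
    from cm show ?thesis
    proof (elim disjE conjE)
      assume a: "a1 \<ge> 1" and c: "card C1 \<ge> 2" and d: "4 * (real mm)\<^sup>2 / (real (card C1) + real (card C2)) ^ 3
        \<le> (real b1)\<^sup>2 / (real (card C1) * (real (card C1) - 1)) - (real b2)\<^sup>2 / (real (card C2) * (real (card C2) + 1))"
      then obtain i where i: "i \<in> C1" "z i = 1" using fin unfolding a1_def
        by (metis (mono_tags, lifting) Collect_empty_eq One_nat_def card.empty not_one_le_zero)
      show ?thesis
        by (rule use_key[OF i(1) _ c, where C'=C2]) (use d i cp11 cp22 in \<open>simp_all add: b1_def b2_def\<close>)
    next
      assume a: "b1 \<ge> 1" and c: "card C1 \<ge> 2" and d: "4 * (real mm)\<^sup>2 / (real (card C1) + real (card C2)) ^ 3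
        \<le> (real a1)\<^sup>2 / (real (card C1) * (real (card C1) - 1)) - (real a2)\<^sup>2 / (real (card C2) * (real (card C2) + 1))"
      then obtain i where i: "i \<in> C1" "z i = 2" using fin unfolding b1_def
        by (metis (mono_tags, lifting) Collect_empty_eq One_nat_def card.empty not_one_le_zero)
      show ?thesis
        by (rule use_key[OF i(1) _ c, where C'=C2]) (use d i cp11 cp22 in \<open>simp_all add: a1_def a2_def\<close>)
    next
      assume a: "a2 \<ge> 1" and c: "card C2 \<ge> 2" and d: "4 * (real mm)\<^sup>2 / (real (card C1) + real (card C2)) ^ 3
        \<le> (real b2)\<^sup>2 / (real (card C2) * (real (card C2) - 1)) - (real b1)\<^sup>2 / (real (card C1) * (real (card C1) + 1))"
      then obtain i where i: "i \<in> C2" "z i = 1" using fin unfolding a2_def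
        by (metis (mono_tags, lifting) Collect_empty_eq One_nat_def card.empty not_one_le_zero)
      show ?thesis
        by (rule use_key[OF i(1) _ c, where C'=C1]) (use d i cp11 cp22 in \<open>simp_all add: b1_def b2_def add.commute\<close>)
    next
      assume a: "b2 \<ge> 1" and c: "card C2 \<ge> 2" and d: "4 * (real mm)\<^sup>2 / (real (card C1) + real (card C2)) ^ 3
        \<le> (real a2)\<^sup>2 / (real (card C2) * (real (card C2) - 1)) - (real a1)\<^sup>2 / (real (card C1) * (real (card C1) + 1))"
      then obtain i where i: "i \<in> C2" "z i = 2" using fin unfolding b2_def
        by (metis (mono_tags, lifting) Collect_empty_eq One_nat_def card.empty not_one_le_zero)
      show ?thesis
        by (rule use_key[OF i(1) _ c, where C'=C1]) (use d i cp11 cp22 in \<open>simp_all add: a1_def a2_def add.commute\<close>)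
    qed
  qed
  have rho1: "1 - (4 * \<tau>^2 * (real mm / real n)^2 / real n / (3 * \<tau>^2 + \<sigma>^2))^2 < 1"
  proof -
    have "4 * \<tau>^2 * (real mm / real n)^2 / real n / (3 * \<tau>^2 + \<sigma>^2) > 0"
      using t s n4 mm1 by (intro divide_pos_pos mult_pos_pos) (auto simp: add_pos_pos)
    then have "(4 * \<tau>^2 * (real mm / real n)^2 / real n / (3 * \<tau>^2 + \<sigma>^2))^2 > 0" by (rule zero_less_power)
    then show ?thesis by linarith
  qed
  show ?thesis
    unfolding Let_def S1_def[symmetric] S2_def[symmetric] mm_def[symmetric]
    using rho1 mainb by (simp add: H_def bound_def)
qed

end
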